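(* Let $C$ be a coalgebra over a field $\Bbbk$. Then $C$ is left f-qcF if and only if every finite dimensional right coideal of $C$ embeds, as a left $C^*$-module, in a free left $C^*$-module.
   Context: The dual algebra $C^*$ has product $(fg)(x)=\sum f(x_1)g(x_2)$; a right $C$-comodule $M$ (coaction $m\mapsto\sum m_0\otimes m_1$) is a left $C^*$-module via $f\rightharpoonup m=\sum m_0f(m_1)$. A right coideal of $C$ is a subspace $I$ with $\Delta(I)\subseteq I\otimes C$ (a right $C$-subcomodule of $C$). $C$ is left f-qcF if every finite dimensional right $C$-comodule embeds, as a left $C^*$-module, in a free left $C^*$-module. *)

theory Defs
  imports Complex_Main "HOL-Library.Groups_Big_Fun" "HOL-Library.Function_Algebras"
begin

text \<open>
A coalgebra C over a field 'k is presented by a basis indexed by the type 'b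
(every vector space has a basis).  Elements of C are finitely supported
coordinate functions 'b \<Rightarrow> 'k.  The comultiplication is given by
structure constants: D b b1 b2 is the coefficient of e_b1 \<otimes> e_b2 in
\<Delta>(e_b); the counit is eps b = \<epsilon>(e_b).  C \<otimes> C is identified with
finitely supported functions on 'b \<times> 'b.  The dual algebra C* is the
set of all functions 'b \<Rightarrow> 'k (f b = f(e_b)).
\<close>

definition coalgebra :: "('b \<Rightarrow> 'b \<Rightarrow> 'b \<Rightarrow> 'k::field) \<Rightarrow> ('b \<Rightarrow> 'k) \<Rightarrow> bool" where
  "coalgebra D eps \<longleftrightarrow>
     (\<forall>b. finite {(b1, b2). D b b1 b2 \<noteq> 0}) \<and>
     \<comment> \<open>coassociativity: (\<Delta> \<otimes> id) \<Delta> = (id \<otimes> \<Delta>) \<Delta>\<close>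
     (\<forall>b x y z. (\<Sum>b1. D b b1 z * D b1 x y) = (\<Sum>b2. D b x b2 * D b2 y z)) \<and>
     \<comment> \<open>counit: (\<epsilon> \<otimes> id) \<Delta> = id = (id \<otimes> \<epsilon>) \<Delta>\<close>
     (\<forall>b b2. (\<Sum>b1. eps b1 * D b b1 b2) = (if b = b2 then 1 else 0)) \<and>
     (\<forall>b b1. (\<Sum>b2. D b b1 b2 * eps b2) = (if b = b1 then 1 else 0))"

definition C_elems :: "('b \<Rightarrow> 'k::field) set" where
  "C_elems = {x. finite {b. x b \<noteq> 0}}"

text \<open>Product of the dual algebra C*: (f g)(e_b) = \<Sum> f(b_1) g(b_2).\<close>
definition conv :: "('b \<Rightarrow> 'b \<Rightarrow> 'b \<Rightarrow> 'k::field) \<Rightarrow> ('b \<Rightarrow> 'k) \<Rightarrow> ('b \<Rightarrow> 'k) \<Rightarrow> ('b \<Rightarrow> 'k)" where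
  "conv D f g = (\<lambda>b. \<Sum>p. D b (fst p) (snd p) * f (fst p) * g (snd p))"

text \<open>
A right C-comodule of finite dimension n, presented with basis e_0,...,e_(n-1):
the coaction is \<rho>(e_i) = \<Sum>_(j<n) \<Sum>_b R i j b e_j \<otimes> e_b.
\<close>
definition fd_comodule :: "('b \<Rightarrow> 'b \<Rightarrow> 'b \<Rightarrow> 'k::field) \<Rightarrow> ('b \<Rightarrow> 'k) \<Rightarrow> nat \<Rightarrow> (nat \<Rightarrow> nat \<Rightarrow> 'b \<Rightarrow> 'k) \<Rightarrow> bool" where
  "fd_comodule D eps n R \<longleftrightarrow>
     (\<forall>i j b. (i \<ge> n \<or> j \<ge> n) \<longrightarrow> R i j b = 0) \<and>
     (\<forall>i j. finite {b. R i j b \<noteq> 0}) \<and>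
     \<comment> \<open>coassociativity: (\<rho> \<otimes> id) \<rho> = (id \<otimes> \<Delta>) \<rho>\<close>
     (\<forall>i k x y. (\<Sum>j<n. R i j y * R j k x) = (\<Sum>b. R i k b * D b x y)) \<and>
     \<comment> \<open>counit: (id \<otimes> \<epsilon>) \<rho> = id\<close>
     (\<forall>i<n. \<forall>j<n. (\<Sum>b. R i j b * eps b) = (if i = j then 1 else 0))"

definition fd_elems :: "nat \<Rightarrow> (nat \<Rightarrow> 'k::field) set" where
  "fd_elems n = {v. \<forall>i\<ge>n. v i = 0}"

text \<open>Left C*-action on a comodule: f \<rightharpoonup> m = \<Sum> m_0 f(m_1).\<close>
definition comod_act :: "nat \<Rightarrow> (nat \<Rightarrow> nat \<Rightarrow> 'b \<Rightarrow> 'k::field) \<Rightarrow> ('b \<Rightarrow> 'k) \<Rightarrow> (nat \<Rightarrow> 'k) \<Rightarrow> (nat \<Rightarrow> 'k)" where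
  "comod_act n R f v = (\<lambda>j. \<Sum>i<n. v i * (\<Sum>b. R i j b * f b))"

text \<open>Right coideals: subspaces I of C with \<Delta>(I) \<subseteq> I \<otimes> C
  (an element t of C \<otimes> C lies in I \<otimes> C iff each slice t(-, b2) lies in I).\<close>
definition right_coideal :: "('b \<Rightarrow> 'b \<Rightarrow> 'b \<Rightarrow> 'k::field) \<Rightarrow> ('b \<Rightarrow> 'k) set \<Rightarrow> bool" where
  "right_coideal D I \<longleftrightarrow>
     I \<subseteq> C_elems \<and> 0 \<in> I \<and>
     (\<forall>x\<in>I. \<forall>y\<in>I. x + y \<in> I) \<and> (\<forall>c. \<forall>x\<in>I. (\<lambda>b. c * x b) \<in> I) \<and>
     (\<forall>x\<in>I. \<forall>b2. (\<lambda>b1. \<Sum>b. x b * D b b1 b2) \<in> I)"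

definition fin_dim_subspace :: "('b \<Rightarrow> 'k::field) set \<Rightarrow> bool" where
  "fin_dim_subspace I \<longleftrightarrow>
     (\<exists>S. finite S \<and> S \<subseteq> I \<and> I = Modules.module.span (\<lambda>c x b. c * x b) S)"

text \<open>Left C*-action on C (as right C-comodule): f \<rightharpoonup> x = \<Sum> x_1 f(x_2).\<close>
definition coideal_act :: "('b \<Rightarrow> 'b \<Rightarrow> 'b \<Rightarrow> 'k::field) \<Rightarrow> ('b \<Rightarrow> 'k) \<Rightarrow> ('b \<Rightarrow> 'k) \<Rightarrow> ('b \<Rightarrow> 'k)" where
  "coideal_act D f x = (\<lambda>b1. \<Sum>p. x (fst p) * D (fst p) b1 (snd p) * f (snd p))"

text \<open>Free left C*-module with basis indexed by nat: finitely supported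
  families of elements of C*, with componentwise left multiplication.\<close>
definition free_elems :: "(nat \<Rightarrow> 'b \<Rightarrow> 'k::field) set" where
  "free_elems = {u. finite {i. u i \<noteq> 0}}"

definition free_act :: "('b \<Rightarrow> 'b \<Rightarrow> 'b \<Rightarrow> 'k::field) \<Rightarrow> ('b \<Rightarrow> 'k) \<Rightarrow> (nat \<Rightarrow> 'b \<Rightarrow> 'k) \<Rightarrow> (nat \<Rightarrow> 'b \<Rightarrow> 'k)" where
  "free_act D f u = (\<lambda>i. conv D f (u i))"

definition embeds_in_free :: "('b \<Rightarrow> 'b \<Rightarrow> 'b \<Rightarrow> 'k::field) \<Rightarrow> 'v::plus set \<Rightarrow> (('b \<Rightarrow> 'k) \<Rightarrow> 'v \<Rightarrow> 'v) \<Rightarrow> bool" where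
  "embeds_in_free D M act \<longleftrightarrow>
     (\<exists>\<phi>. (\<forall>x\<in>M. \<phi> x \<in> free_elems) \<and>
          (\<forall>x\<in>M. \<forall>y\<in>M. \<phi> (x + y) = \<phi> x + \<phi> y) \<and>
          (\<forall>f. \<forall>x\<in>M. \<phi> (act f x) = free_act D f (\<phi> x)) \<and>
          inj_on \<phi> M)"

definition left_f_qcF :: "('b \<Rightarrow> 'b \<Rightarrow> 'b \<Rightarrow> 'k::field) \<Rightarrow> ('b \<Rightarrow> 'k) \<Rightarrow> bool" where
  "left_f_qcF D eps \<longleftrightarrow>
     (\<forall>n R. fd_comodule D eps n R \<longrightarrow> embeds_in_free D (fd_elems n) (comod_act n R))"

end

theory Submission
  imports Defs "HOL-Library.Nat_Bijection"
begin

interpretation fv: vector_space "(\<lambda>c x b. c * x b) :: 'k::field \<Rightarrow> ('b \<Rightarrow> 'k) \<Rightarrow> ('b \<Rightarrow> 'k)"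
  by unfold_locales (auto simp: fun_eq_iff algebra_simps)

lemma sum_fun_apply: "(sum f A) x = sum (\<lambda>a. f a x) A"
  by (induct A rule: infinite_finite_induct) auto

lemma SA: assumes "finite A" "\<And>a. a \<notin> A \<Longrightarrow> g a = 0" shows "Sum_any g = sum g A"
  using assms by (intro Sum_any.expand_superset) auto

definition slice :: "('b \<Rightarrow> 'b \<Rightarrow> 'b \<Rightarrow> 'k::field) \<Rightarrow> ('b \<Rightarrow> 'k) \<Rightarrow> 'b \<Rightarrow> 'b \<Rightarrow> 'k" where
  "slice D x b2 = (\<lambda>b1. \<Sum>b. x b * D b b1 b2)"

definition S2 :: "('b \<Rightarrow> 'b \<Rightarrow> 'b \<Rightarrow> 'k::field) \<Rightarrow> 'b set \<Rightarrow> 'b set" where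
  "S2 D T = {b2. \<exists>b\<in>T. \<exists>b1. D b b1 b2 \<noteq> 0}"

definition S1 :: "('b \<Rightarrow> 'b \<Rightarrow> 'b \<Rightarrow> 'k::field) \<Rightarrow> 'b set \<Rightarrow> 'b set" where
  "S1 D T = {b1. \<exists>b\<in>T. \<exists>b2. D b b1 b2 \<noteq> 0}"

lemma Sum_any_sum:
  assumes "finite F" "\<And>i. i \<in> F \<Longrightarrow> finite {b. g i b \<noteq> 0}"
  shows "Sum_any (\<lambda>b. \<Sum>i\<in>F. g i b) = (\<Sum>i\<in>F. Sum_any (g i))"
proof -
  let ?T = "\<Union>i\<in>F. {b. g i b \<noteq> 0}"
  have fT: "finite ?T" using assms by auto
  have "Sum_any (\<lambda>b. \<Sum>i\<in>F. g i b) = (\<Sum>b\<in>?T. \<Sum>i\<in>F. g i b)"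
    by (rule SA[OF fT]) (auto intro!: sum.neutral)
  also have "\<dots> = (\<Sum>i\<in>F. \<Sum>b\<in>?T. g i b)" by (rule sum.swap)
  also have "\<dots> = (\<Sum>i\<in>F. Sum_any (g i))"
    by (rule sum.cong[OF refl], rule SA[OF fT, symmetric]) auto
  finally show ?thesis .
qed

context
  fixes D :: "'b \<Rightarrow> 'b \<Rightarrow> 'b \<Rightarrow> 'k::field" and eps :: "'b \<Rightarrow> 'k"
  assumes coalg: "coalgebra D eps"
begin

lemma Dfin: "finite {(b1, b2). D b b1 b2 \<noteq> 0}"
  using coalg by (simp add: coalgebra_def)

lemma coassoc: "Sum_any (\<lambda>b1. D b b1 z * D b1 x y) = Sum_any (\<lambda>b2. D b x b2 * D b2 y z)"
  using coalg by (simp add: coalgebra_def)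

lemma fin_S2: assumes "finite T" shows "finite (S2 D T)"
proof -
  have "S2 D T \<subseteq> (\<Union>b\<in>T. snd ` {(b1, b2). D b b1 b2 \<noteq> 0})"
    unfolding S2_def by force
  moreover have "finite (\<Union>b\<in>T. snd ` {(b1, b2). D b b1 b2 \<noteq> 0})"
    using assms Dfin by auto
  ultimately show ?thesis by (rule finite_subset)
qed

lemma fin_S1: assumes "finite T" shows "finite (S1 D T)"
proof -
  have "S1 D T \<subseteq> (\<Union>b\<in>T. fst ` {(b1, b2). D b b1 b2 \<noteq> 0})"
    unfolding S1_def by force
  moreover have "finite (\<Union>b\<in>T. fst ` {(b1, b2). D b b1 b2 \<noteq> 0})"
    using assms Dfin by auto
  ultimately show ?thesis by (rule finite_subset)
qed

lemma slice_eq: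
  assumes "finite T" "\<And>b. b \<notin> T \<Longrightarrow> x b = 0"
  shows "slice D x b2 b1 = (\<Sum>b\<in>T. x b * D b b1 b2)"
  unfolding slice_def using assms by (intro SA) auto

lemma slice_out:
  assumes "finite T" "\<And>b. b \<notin> T \<Longrightarrow> x b = 0" "b2 \<notin> S2 D T"
  shows "slice D x b2 b1 = 0"
  using assms by (simp add: slice_eq[OF assms(1,2)] S2_def)

lemma coideal_act_eq:
  assumes "finite T" "\<And>b. b \<notin> T \<Longrightarrow> x b = 0" "finite U" "S2 D T \<subseteq> U"
  shows "coideal_act D f x b1 = (\<Sum>c\<in>U. f c * slice D x c b1)"
proof -
  have "coideal_act D f x b1 = (\<Sum>p\<in>T \<times> U. x (fst p) * D (fst p) b1 (snd p) * f (snd p))"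
    unfolding coideal_act_def
  proof (rule SA)
    fix p assume p: "p \<notin> T \<times> U"
    show "x (fst p) * D (fst p) b1 (snd p) * f (snd p) = 0"
    proof (cases "fst p \<in> T")
      case False then show ?thesis using assms(2) by simp
    next
      case True
      then have "snd p \<notin> S2 D T" using p assms(4) by (cases p) auto
      then have "D (fst p) b1 (snd p) = 0" using True unfolding S2_def by blast
      then show ?thesis by simp
    qed
  qed (use assms in auto)
  also have "\<dots> = (\<Sum>b\<in>T. \<Sum>c\<in>U. x b * D b b1 c * f c)"
    by (simp add: sum.cartesian_product split_def)
  also have "\<dots> = (\<Sum>c\<in>U. \<Sum>b\<in>T. x b * D b b1 c * f c)"
    by (rule sum.swap)
  also have "\<dots> = (\<Sum>c\<in>U. f c * slice D x c b1)"
    by (simp add: slice_eq[OF assms(1,2)] sum_distrib_left mult_ac)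
  finally show ?thesis .
qed

end

definition psi :: "nat \<Rightarrow> (nat \<Rightarrow> nat \<Rightarrow> 'b \<Rightarrow> 'k::field) \<Rightarrow> (nat \<Rightarrow> 'k) \<Rightarrow> nat \<Rightarrow> 'b \<Rightarrow> 'k" where
  "psi n R v j = (\<lambda>b. \<Sum>i<n. v i * R i j b)"

definition Tc :: "(nat \<Rightarrow> nat \<Rightarrow> 'b \<Rightarrow> 'k::field) \<Rightarrow> 'b set" where
  "Tc R = {b. \<exists>i j. R i j b \<noteq> 0}"

context
  fixes D :: "'b \<Rightarrow> 'b \<Rightarrow> 'b \<Rightarrow> 'k::field" and eps :: "'b \<Rightarrow> 'k"
    and n :: nat and R :: "nat \<Rightarrow> nat \<Rightarrow> 'b \<Rightarrow> 'k"
  assumes coalg: "coalgebra D eps" and com: "fd_comodule D eps n R"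
begin

lemma R_out: "i \<ge> n \<or> j \<ge> n \<Longrightarrow> R i j b = 0"
  using com unfolding fd_comodule_def by blast

lemma Rfin: "finite {b. R i j b \<noteq> 0}"
  using com by (simp add: fd_comodule_def)

lemma Rcoassoc: "(\<Sum>j<n. R i j y * R j k x) = Sum_any (\<lambda>b. R i k b * D b x y)"
  using com by (simp add: fd_comodule_def)

lemma Rcounit: "i < n \<Longrightarrow> j < n \<Longrightarrow> Sum_any (\<lambda>b. R i j b * eps b) = (if i = j then 1 else 0)"
  using com by (simp add: fd_comodule_def)

lemma fin_Tc: "finite (Tc R)"
proof -
  have "Tc R \<subseteq> (\<Union>i<n. \<Union>j<n. {b. R i j b \<noteq> 0})"
    unfolding Tc_def using R_out by (auto, metis lessThan_iff not_le)
  moreover have "finite (\<Union>i<n. \<Union>j<n. {b. R i j b \<noteq> 0})" using Rfin by auto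
  ultimately show ?thesis by (rule finite_subset)
qed

lemma R_outT: "b \<notin> Tc R \<Longrightarrow> R i j b = 0"
  unfolding Tc_def by auto

lemma psi_out: "b \<notin> Tc R \<Longrightarrow> psi n R v j b = 0"
  unfolding psi_def by (simp add: R_outT)

lemma slice_R: "slice D (R i j) b2 b1 = (\<Sum>k<n. R i k b2 * R k j b1)"
  unfolding slice_def by (simp add: Rcoassoc)

lemma slice_psi: "slice D (psi n R v j) c b1 = (\<Sum>i<n. v i * slice D (R i j) c b1)"
proof -
  have "slice D (psi n R v j) c b1 = (\<Sum>b\<in>Tc R. psi n R v j b * D b b1 c)"
    by (rule slice_eq[OF coalg fin_Tc]) (rule psi_out)
  also have "\<dots> = (\<Sum>i<n. v i * (\<Sum>b\<in>Tc R. R i j b * D b b1 c))"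
    unfolding psi_def by (simp add: sum_distrib_left sum_distrib_right mult_ac sum.swap[of _ "Tc R"])
  also have "\<dots> = (\<Sum>i<n. v i * slice D (R i j) c b1)"
    by (simp add: slice_eq[OF coalg fin_Tc R_outT])
  finally show ?thesis .
qed

lemma psi_act: "psi n R (comod_act n R f v) j = coideal_act D f (psi n R v j)"
proof
  fix b1
  let ?U = "Tc R \<union> S2 D (Tc R)"
  have fU: "finite ?U" using fin_Tc fin_S2[OF coalg fin_Tc] by simp
  have "coideal_act D f (psi n R v j) b1 = (\<Sum>c\<in>?U. f c * slice D (psi n R v j) c b1)"
    by (rule coideal_act_eq[OF coalg fin_Tc psi_out fU]) auto
  also have "\<dots> = (\<Sum>c\<in>?U. \<Sum>i<n. \<Sum>k<n. f c * v i * R i k c * R k j b1)"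
    by (simp add: slice_psi slice_R sum_distrib_left mult_ac)
  finally have r: "coideal_act D f (psi n R v j) b1 = (\<Sum>c\<in>?U. \<Sum>i<n. \<Sum>k<n. f c * v i * R i k c * R k j b1)" .
  have sa: "Sum_any (\<lambda>b. R i k b * f b) = (\<Sum>c\<in>?U. R i k c * f c)" for i k
    by (rule SA[OF fU]) (simp add: R_outT)
  have "psi n R (comod_act n R f v) j b1 = (\<Sum>k<n. \<Sum>i<n. \<Sum>c\<in>?U. f c * v i * R i k c * R k j b1)"
    unfolding psi_def comod_act_def sa by (simp add: sum_distrib_left sum_distrib_right mult_ac)
  also have "\<dots> = (\<Sum>i<n. \<Sum>k<n. \<Sum>c\<in>?U. f c * v i * R i k c * R k j b1)"
    by (rule sum.swap)
  also have "\<dots> = (\<Sum>i<n. \<Sum>c\<in>?U. \<Sum>k<n. f c * v i * R i k c * R k j b1)"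
    by (rule sum.cong[OF refl], rule sum.swap)
  also have "\<dots> = (\<Sum>c\<in>?U. \<Sum>i<n. \<Sum>k<n. f c * v i * R i k c * R k j b1)"
    by (rule sum.swap)
  finally show "psi n R (comod_act n R f v) j b1 = coideal_act D f (psi n R v j) b1" using r by simp
qed

lemma psi_counit:
  assumes "v \<in> fd_elems n" "j < n"
  shows "Sum_any (\<lambda>b. psi n R v j b * eps b) = v j"
proof -
  have "Sum_any (\<lambda>b. psi n R v j b * eps b) = Sum_any (\<lambda>b. \<Sum>i<n. v i * (R i j b * eps b))"
    unfolding psi_def by (simp add: sum_distrib_right sum_distrib_left mult_ac)
  also have "\<dots> = (\<Sum>i<n. Sum_any (\<lambda>b. v i * (R i j b * eps b)))"
    by (rule Sum_any_sum) (auto intro: finite_subset[OF _ Rfin])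
  also have "\<dots> = (\<Sum>i<n. v i * Sum_any (\<lambda>b. R i j b * eps b))"
    by (rule sum.cong[OF refl], rule Sum_any_right_distrib[symmetric]) (auto intro: finite_subset[OF _ Rfin])
  also have "\<dots> = (\<Sum>i<n. if i = j then v i else 0)"
    by (rule sum.cong[OF refl]) (simp add: Rcounit assms(2))
  also have "\<dots> = v j" using assms(2) by simp
  finally show ?thesis .
qed

end

lemma slice_zero: "slice D 0 b2 = 0"
  unfolding slice_def by (simp add: fun_eq_iff)

lemma slice_add: assumes "x \<in> C_elems" "y \<in> C_elems"
  shows "slice D (x + y) b2 = slice D x b2 + slice D y b2"
proof
  fix b1
  have fx: "finite {b. x b * D b b1 b2 \<noteq> 0}"
    using assms(1) by (auto simp: C_elems_def intro: finite_subset)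
  have fy: "finite {b. y b * D b b1 b2 \<noteq> 0}"
    using assms(2) by (auto simp: C_elems_def intro: finite_subset)
  show "slice D (x + y) b2 b1 = (slice D x b2 + slice D y b2) b1"
    unfolding slice_def using Sum_any.distrib[OF fx fy] by (simp add: distrib_right)
qed

lemma slice_scale: assumes "x \<in> C_elems"
  shows "slice D (\<lambda>b. c * x b) b2 = (\<lambda>b1. c * slice D x b2 b1)"
proof
  fix b1
  have fx: "finite {b. x b * D b b1 b2 \<noteq> 0}"
    using assms(1) by (auto simp: C_elems_def intro: finite_subset)
  show "slice D (\<lambda>b. c * x b) b2 b1 = c * slice D x b2 b1"
    unfolding slice_def using Sum_any_right_distrib[OF fx, of c] by (simp add: mult_ac)
qed

lemma C_elems_subspace: "fv.subspace (C_elems :: ('b \<Rightarrow> 'k::field) set)"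
  unfolding fv.subspace_def C_elems_def
proof (intro conjI ballI allI)
  show "0 \<in> {x::'b\<Rightarrow>'k. finite {b. x b \<noteq> 0}}" by simp
next
  fix x y :: "'b \<Rightarrow> 'k" assume "x \<in> {x. finite {b. x b \<noteq> 0}}" "y \<in> {x. finite {b. x b \<noteq> 0}}"
  then show "x + y \<in> {x. finite {b. x b \<noteq> 0}}"
    by (auto intro: finite_subset[of _ "{b. x b \<noteq> 0} \<union> {b. y b \<noteq> 0}"])
next
  fix c :: 'k and x :: "'b \<Rightarrow> 'k" assume "x \<in> {x. finite {b. x b \<noteq> 0}}"
  then show "(\<lambda>b. c * x b) \<in> {x. finite {b. x b \<noteq> 0}}"
    by (auto intro: finite_subset)
qed

definition Gens :: "nat \<Rightarrow> (nat \<Rightarrow> nat \<Rightarrow> 'b \<Rightarrow> 'k::field) \<Rightarrow> ('b \<Rightarrow> 'k) set" where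
  "Gens n R = (\<lambda>(i, j). R i j) ` ({..<n} \<times> {..<n})"

context
  fixes D :: "'b \<Rightarrow> 'b \<Rightarrow> 'b \<Rightarrow> 'k::field" and eps :: "'b \<Rightarrow> 'k"
    and n :: nat and R :: "nat \<Rightarrow> nat \<Rightarrow> 'b \<Rightarrow> 'k"
  assumes coalg: "coalgebra D eps" and com: "fd_comodule D eps n R"
begin

lemma R_in: "R i j \<in> fv.span (Gens n R)"
proof (cases "i < n \<and> j < n")
  case True then show ?thesis by (intro fv.span_base) (auto simp: Gens_def)
next
  case False
  then have "R i j = 0" using R_out[OF coalg com] by (auto simp: fun_eq_iff not_less)
  then show ?thesis by (simp add: fv.span_zero)
qed

lemma R_C: "R i j \<in> C_elems"
  using Rfin[OF coalg com] by (simp add: C_elems_def)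

lemma span_sub: "fv.span (Gens n R) \<subseteq> {x \<in> C_elems. \<forall>b2. slice D x b2 \<in> fv.span (Gens n R)}"
proof (rule fv.span_minimal)
  show "Gens n R \<subseteq> {x \<in> C_elems. \<forall>b2. slice D x b2 \<in> fv.span (Gens n R)}"
  proof -
    have *: "slice D (R i j) b2 \<in> fv.span (Gens n R)" for i j b2
    proof -
    have "slice D (R i j) b2 = (\<Sum>k<n. (\<lambda>b1. R i k b2 * R k j b1))"
      by (simp add: fun_eq_iff sum_fun_apply slice_R[OF coalg com])
    also have "\<dots> \<in> fv.span (Gens n R)"
      by (intro fv.span_sum fv.span_scale R_in)
    finally show "slice D (R i j) b2 \<in> fv.span (Gens n R)" .
    qed
    then show ?thesis by (auto simp: Gens_def R_C)
  qed
next
  show "fv.subspace {x \<in> C_elems. \<forall>b2. slice D x b2 \<in> fv.span (Gens n R)}"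
    unfolding fv.subspace_def
  proof (intro conjI ballI allI)
    show "0 \<in> {x \<in> C_elems. \<forall>b2. slice D x b2 \<in> fv.span (Gens n R)}"
      using fv.subspace_0[OF C_elems_subspace] by (simp add: slice_zero fv.span_zero)
  next
    fix x y assume x: "x \<in> {x \<in> C_elems. \<forall>b2. slice D x b2 \<in> fv.span (Gens n R)}"
      and y: "y \<in> {x \<in> C_elems. \<forall>b2. slice D x b2 \<in> fv.span (Gens n R)}"
    then show "x + y \<in> {x \<in> C_elems. \<forall>b2. slice D x b2 \<in> fv.span (Gens n R)}"
      using fv.subspace_add[OF C_elems_subspace] by (auto simp: slice_add fv.span_add)
  next
    fix c x assume x: "x \<in> {x \<in> C_elems. \<forall>b2. slice D x b2 \<in> fv.span (Gens n R)}"
    then show "(\<lambda>b. c * x b) \<in> {x \<in> C_elems. \<forall>b2. slice D x b2 \<in> fv.span (Gens n R)}"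
      using fv.subspace_scale[OF C_elems_subspace] by (auto simp: slice_scale fv.span_scale)
  qed
qed

lemma rc: "right_coideal D (fv.span (Gens n R))"
  unfolding right_coideal_def
  using span_sub by (auto simp: fv.span_zero fv.span_add fv.span_scale slice_def[symmetric])

lemma fdI: "fin_dim_subspace (fv.span (Gens n R))"
  unfolding fin_dim_subspace_def
  by (rule exI[of _ "Gens n R"]) (auto simp: Gens_def fv.span_superset)

lemma psi_in: "psi n R v j \<in> fv.span (Gens n R)"
proof -
  have "psi n R v j = (\<Sum>i<n. (\<lambda>b. v i * R i j b))"
    by (simp add: psi_def fun_eq_iff sum_fun_apply)
  also have "\<dots> \<in> fv.span (Gens n R)"
    by (intro fv.span_sum fv.span_scale R_in)
  finally show ?thesis .
qed

lemma embed_comod: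
  assumes H: "\<forall>I. right_coideal D I \<and> fin_dim_subspace I \<longrightarrow> embeds_in_free D I (coideal_act D)"
  shows "embeds_in_free D (fd_elems n) (comod_act n R)"
proof -
  let ?I = "fv.span (Gens n R)"
  from H rc fdI obtain \<phi> where
    p1: "\<forall>x\<in>?I. \<phi> x \<in> free_elems" and
    p2: "\<forall>x\<in>?I. \<forall>y\<in>?I. \<phi> (x + y) = \<phi> x + \<phi> y" and
    p3: "\<forall>f. \<forall>x\<in>?I. \<phi> (coideal_act D f x) = free_act D f (\<phi> x)" and
    p4: "inj_on \<phi> ?I"
    unfolding embeds_in_free_def by blast
  have phi0: "\<phi> 0 = 0"
    using p2 fv.span_zero by (metis add_cancel_right_right add_0)
  have psi_hi: "j \<ge> n \<Longrightarrow> psi n R v j = 0" for v j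
    using R_out[OF coalg com] by (simp add: psi_def fun_eq_iff)
  define \<Phi> where "\<Phi> v = (\<lambda>m. \<phi> (psi n R v (fst (prod_decode m))) (snd (prod_decode m)))" for v
  show ?thesis
    unfolding embeds_in_free_def
  proof (intro exI[of _ \<Phi>] conjI ballI allI)
    fix v :: "nat \<Rightarrow> 'k"
    let ?A = "prod_encode ` (\<Union>j<n. {j} \<times> {k. \<phi> (psi n R v j) k \<noteq> 0})"
    have "{m. \<Phi> v m \<noteq> 0} \<subseteq> ?A"
    proof
      fix m assume m: "m \<in> {m. \<Phi> v m \<noteq> 0}"
      obtain j k where jk: "prod_decode m = (j, k)" by (cases "prod_decode m")
      have "j < n" using m jk psi_hi[of j v] phi0 by (auto simp: \<Phi>_def not_less[symmetric])
      moreover have "m = prod_encode (j, k)" using jk by (metis prod_decode_inverse)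
      ultimately show "m \<in> ?A" using m jk by (auto simp: \<Phi>_def)
    qed
    moreover have "finite ?A" using p1 psi_in by (auto simp: free_elems_def)
    ultimately show "\<Phi> v \<in> free_elems" by (auto simp: free_elems_def intro: finite_subset)
  next
    fix v w :: "nat \<Rightarrow> 'k"
    have "psi n R (v + w) j = psi n R v j + psi n R w j" for j
      by (simp add: psi_def fun_eq_iff distrib_right sum.distrib)
    then have "psi n R (v + w) j = psi n R v j + psi n R w j" for j by simp
    then have "\<phi> (psi n R (v + w) j) = \<phi> (psi n R v j) + \<phi> (psi n R w j)" for j
      using p2 psi_in by simp
    then show "\<Phi> (v + w) = \<Phi> v + \<Phi> w"
      unfolding \<Phi>_def by (simp add: fun_eq_iff)
  next
    fix f v
    show "\<Phi> (comod_act n R f v) = free_act D f (\<Phi> v)"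
      using p3 psi_in by (simp add: \<Phi>_def fun_eq_iff psi_act[OF coalg com] free_act_def)
  next
    show "inj_on \<Phi> (fd_elems n)"
    proof (rule inj_onI)
      fix v w assume v: "v \<in> fd_elems n" and w: "w \<in> fd_elems n" and e: "\<Phi> v = \<Phi> w"
      show "v = w"
      proof
        fix j
        show "v j = w j"
        proof (cases "j < n")
          case True
          have "\<phi> (psi n R v j) = \<phi> (psi n R w j)"
          proof
            fix k
            show "\<phi> (psi n R v j) k = \<phi> (psi n R w j) k"
              using fun_cong[OF e, of "prod_encode (j, k)"] by (simp add: \<Phi>_def)
          qed
          then have "psi n R v j = psi n R w j" using p4 psi_in by (meson inj_onD)
          then show ?thesis using psi_counit[OF coalg com v True] psi_counit[OF coalg com w True] by simp
        next
          case False then show ?thesis using v w by (simp add: fd_elems_def)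
        qed
      qed
    qed
  qed
qed

end

context
  fixes D :: "'b \<Rightarrow> 'b \<Rightarrow> 'b \<Rightarrow> 'k::field" and eps :: "'b \<Rightarrow> 'k"
  assumes coalg: "coalgebra D eps"
begin

lemma counit2: "Sum_any (\<lambda>b2. D b b1 b2 * eps b2) = (if b = b1 then 1 else 0)"
  using coalg by (simp add: coalgebra_def)

lemma SS:
  assumes fT: "finite T" and eo: "\<And>b. b \<notin> T \<Longrightarrow> e b = 0"
  shows "slice D (slice D e y) x c = (\<Sum>b\<in>S2 D T. D b x y * slice D e b c)"
proof -
  have f1: "finite (S1 D T)" using fin_S1[OF coalg fT] .
  have f2: "finite (S2 D T)" using fin_S2[OF coalg fT] .
  have so: "slice D e y b' = 0" if "b' \<notin> S1 D T" for b'
  proof -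
    have "slice D e y b' = (\<Sum>b\<in>T. e b * D b b' y)" by (rule slice_eq[OF coalg fT eo])
    also have "\<dots> = 0" using that by (intro sum.neutral) (auto simp: S1_def)
    finally show ?thesis .
  qed
  have inner: "(\<Sum>b'\<in>S1 D T. D b b' y * D b' c x) = (\<Sum>b2\<in>S2 D T. D b c b2 * D b2 x y)"
    if "b \<in> T" for b
  proof -
    have "(\<Sum>b'\<in>S1 D T. D b b' y * D b' c x) = Sum_any (\<lambda>b1. D b b1 y * D b1 c x)"
      by (rule SA[OF f1, symmetric]) (use that in \<open>auto simp: S1_def\<close>)
    also have "\<dots> = Sum_any (\<lambda>b2. D b c b2 * D b2 x y)" by (rule coassoc[OF coalg])
    also have "\<dots> = (\<Sum>b2\<in>S2 D T. D b c b2 * D b2 x y)"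
      by (rule SA[OF f2]) (use that in \<open>auto simp: S2_def\<close>)
    finally show ?thesis .
  qed
  have "slice D (slice D e y) x c = (\<Sum>b'\<in>S1 D T. slice D e y b' * D b' c x)"
    by (rule slice_eq[OF coalg f1 so])
  also have "\<dots> = (\<Sum>b'\<in>S1 D T. \<Sum>b\<in>T. e b * (D b b' y * D b' c x))"
    by (simp add: slice_eq[OF coalg fT eo] sum_distrib_right sum_distrib_left mult_ac)
  also have "\<dots> = (\<Sum>b\<in>T. \<Sum>b'\<in>S1 D T. e b * (D b b' y * D b' c x))"
    by (rule sum.swap)
  also have "\<dots> = (\<Sum>b\<in>T. e b * (\<Sum>b2\<in>S2 D T. D b c b2 * D b2 x y))"
    by (rule sum.cong[OF refl]) (simp add: sum_distrib_left[symmetric] inner)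
  also have "\<dots> = (\<Sum>b\<in>T. \<Sum>b2\<in>S2 D T. D b2 x y * (e b * D b c b2))"
    by (simp add: sum_distrib_left mult_ac)
  also have "\<dots> = (\<Sum>b2\<in>S2 D T. \<Sum>b\<in>T. D b2 x y * (e b * D b c b2))"
    by (rule sum.swap)
  also have "\<dots> = (\<Sum>b\<in>S2 D T. D b x y * slice D e b c)"
    by (simp add: slice_eq[OF coalg fT eo] sum_distrib_left)
  finally show ?thesis .
qed

lemma CU:
  assumes fT: "finite T" and eo: "\<And>b. b \<notin> T \<Longrightarrow> e b = 0"
  shows "(\<Sum>b\<in>S2 D T. eps b * slice D e b c) = e c"
proof -
  have f2: "finite (S2 D T)" using fin_S2[OF coalg fT] .
  have inner: "(\<Sum>b\<in>S2 D T. D b' c b * eps b) = (if b' = c then 1 else 0)" if "b' \<in> T" for b'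
  proof -
    have "(\<Sum>b\<in>S2 D T. D b' c b * eps b) = Sum_any (\<lambda>b2. D b' c b2 * eps b2)"
      by (rule SA[OF f2, symmetric]) (use that in \<open>auto simp: S2_def\<close>)
    then show ?thesis by (simp add: counit2)
  qed
  have "(\<Sum>b\<in>S2 D T. eps b * slice D e b c) = (\<Sum>b\<in>S2 D T. \<Sum>b'\<in>T. e b' * (D b' c b * eps b))"
    by (simp add: slice_eq[OF coalg fT eo] sum_distrib_left mult_ac)
  also have "\<dots> = (\<Sum>b'\<in>T. \<Sum>b\<in>S2 D T. e b' * (D b' c b * eps b))"
    by (rule sum.swap)
  also have "\<dots> = (\<Sum>b'\<in>T. e b' * (if b' = c then 1 else 0))"
    by (rule sum.cong[OF refl]) (simp add: sum_distrib_left[symmetric] inner)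
  also have "\<dots> = e c"
    using fT eo by (cases "c \<in> T") (auto simp: if_distrib cong: if_cong)
  finally show ?thesis .
qed

end

lemma basis_enum:
  assumes "fin_dim_subspace (I :: ('b \<Rightarrow> 'k::field) set)"
  shows "\<exists>(n::nat) e. I = fv.span (e ` {..<n}) \<and> inj_on e {..<n} \<and> fv.independent (e ` {..<n})"
proof -
  obtain S where S: "finite S" "S \<subseteq> I" "I = fv.span S"
    using assms unfolding fin_dim_subspace_def by blast
  obtain B where B: "B \<subseteq> S" "fv.independent B" "S \<subseteq> fv.span B"
    by (rule fv.maximal_independent_subset)
  have fB: "finite B" using B(1) S(1) by (rule finite_subset)
  have "fv.span B = fv.span S"
    using B by (metis fv.span_mono fv.span_span subset_antisym)
  moreover obtain e where e: "bij_betw e {0..<card B} B" using ex_bij_betw_nat_finite[OF fB] by blast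
  moreover have "e ` {..<card B} = B" "inj_on e {..<card B}"
    using e by (auto simp: bij_betw_def atLeast0LessThan)
  ultimately have "I = fv.span (e ` {..<card B}) \<and> inj_on e {..<card B} \<and> fv.independent (e ` {..<card B})"
    using S(3) B(2) by simp
  then show ?thesis by blast
qed

locale cx =
  fixes D :: "'b \<Rightarrow> 'b \<Rightarrow> 'b \<Rightarrow> 'k::field" and eps :: "'b \<Rightarrow> 'k"
    and I :: "('b \<Rightarrow> 'k) set" and n :: nat and e :: "nat \<Rightarrow> 'b \<Rightarrow> 'k"
  assumes coalg: "coalgebra D eps" and rcI: "right_coideal D I"
    and spanI: "I = fv.span (e ` {..<n})" and einj: "inj_on e {..<n}"
    and indep: "fv.independent (e ` {..<n})"
begin

definition th :: "(nat \<Rightarrow> 'k) \<Rightarrow> 'b \<Rightarrow> 'k" where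
  "th v = (\<lambda>b. \<Sum>i<n. v i * e i b)"

definition Te :: "'b set" where "Te = {b. \<exists>i<n. e i b \<noteq> 0}"

lemma e_I: "i < n \<Longrightarrow> e i \<in> I"
  unfolding spanI by (rule fv.span_base) auto

lemma I_C: "I \<subseteq> C_elems"
  using rcI by (simp add: right_coideal_def)

lemma fin_Te: "finite Te"
proof -
  have "Te = (\<Union>i<n. {b. e i b \<noteq> 0})" by (auto simp: Te_def)
  moreover have "finite (\<Union>i<n. {b. e i b \<noteq> 0})"
    using e_I I_C by (auto simp: C_elems_def)
  ultimately show ?thesis by simp
qed

lemma e_out: "i < n \<Longrightarrow> b \<notin> Te \<Longrightarrow> e i b = 0"
  by (auto simp: Te_def)

lemma th_out: "b \<notin> Te \<Longrightarrow> th v b = 0"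
  by (simp add: th_def e_out)

lemma th_fun: "th v = (\<Sum>i<n. (\<lambda>b. v i * e i b))"
  by (simp add: th_def fun_eq_iff sum_fun_apply)

lemma th_I: "th v \<in> I"
  unfolding th_fun spanI by (intro fv.span_sum fv.span_scale fv.span_base) auto

lemma th_surj: assumes "x \<in> I" shows "\<exists>v\<in>fd_elems n. x = th v"
proof -
  have fin: "finite (e ` {..<n})" by simp
  from assms obtain c where c: "x = (\<Sum>y\<in>e ` {..<n}. (\<lambda>b. c y * y b))"
    unfolding spanI fv.span_finite[OF fin] by auto
  also have "\<dots> = (\<Sum>i<n. (\<lambda>b. c (e i) * e i b))"
    by (simp add: sum.reindex[OF einj])
  also have "\<dots> = th (\<lambda>i. if i < n then c (e i) else 0)"
    unfolding th_fun by (rule sum.cong) auto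
  finally show ?thesis by (intro bexI[of _ "\<lambda>i. if i < n then c (e i) else 0"]) (auto simp: fd_elems_def)
qed

lemma th_inj: assumes v: "v \<in> fd_elems n" and w: "w \<in> fd_elems n" and eq: "th v = th w"
  shows "v = w"
proof
  fix j
  show "v j = w j"
  proof (cases "j < n")
    case False then show ?thesis using v w by (simp add: fd_elems_def)
  next
    case True
    define g where "g y = (v - w) (the_inv_into {..<n} e y)" for y
    have "(\<Sum>y\<in>e ` {..<n}. (\<lambda>b. g y * y b)) = (\<Sum>i<n. (\<lambda>b. (v - w) i * e i b))"
      by (simp add: sum.reindex[OF einj] g_def the_inv_into_f_f[OF einj])
    also have "\<dots> = th v - th w"
      by (simp add: th_def fun_eq_iff sum_fun_apply left_diff_distrib sum_subtractf)
    also have "\<dots> = 0" using eq by simp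
    finally have "(\<Sum>y\<in>e ` {..<n}. (\<lambda>b. g y * y b)) = 0" .
    then have "g (e j) = 0"
      using fv.independentD[OF indep, of "e ` {..<n}" g "e j"] True by simp
    then show ?thesis using True by (simp add: g_def the_inv_into_f_f[OF einj])
  qed
qed

definition crd :: "('b \<Rightarrow> 'k) \<Rightarrow> nat \<Rightarrow> 'k" where
  "crd x = (SOME v. v \<in> fd_elems n \<and> x = th v)"

lemma crd: assumes "x \<in> I" shows "crd x \<in> fd_elems n" "th (crd x) = x"
proof -
  have "\<exists>v. v \<in> fd_elems n \<and> x = th v" using th_surj[OF assms] by blast
  then have "crd x \<in> fd_elems n \<and> x = th (crd x)" unfolding crd_def by (rule someI_ex)
  then show "crd x \<in> fd_elems n" "th (crd x) = x" by auto
qed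

lemma crd_th: assumes "v \<in> fd_elems n" shows "crd (th v) = v"
  using crd[OF th_I] th_inj assms by metis

definition R :: "nat \<Rightarrow> nat \<Rightarrow> 'b \<Rightarrow> 'k" where
  "R i j b = (if i < n \<and> j < n then crd (slice D (e i) b) j else 0)"

lemma slice_I: "i < n \<Longrightarrow> slice D (e i) b \<in> I"
  using rcI e_I unfolding right_coideal_def slice_def by blast

lemma Rvec: "i < n \<Longrightarrow> (\<lambda>j. R i j b) = crd (slice D (e i) b)"
  using crd(1)[OF slice_I] by (auto simp: R_def fun_eq_iff fd_elems_def not_less)

lemma Rslice: "i < n \<Longrightarrow> slice D (e i) b = th (\<lambda>j. R i j b)"
  by (simp add: Rvec crd(2)[OF slice_I])

lemma Rslice': "i < n \<Longrightarrow> slice D (e i) b c = (\<Sum>j<n. R i j b * e j c)"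
  by (simp add: Rslice th_def)

abbreviation "Q \<equiv> S2 D Te"

lemma fin_Q: "finite Q" by (rule fin_S2[OF coalg fin_Te])

lemma th0: "th 0 = 0" by (simp add: th_def fun_eq_iff)

lemma R_outQ: "b \<notin> Q \<Longrightarrow> R i j b = 0"
proof (cases "i < n")
  case True
  assume b: "b \<notin> Q"
  have "slice D (e i) b = 0"
    using slice_out[OF coalg fin_Te e_out[OF True] b] by (simp add: fun_eq_iff)
  then have "crd (slice D (e i) b) = 0"
    using crd_th[of 0] th0 by (simp add: fd_elems_def)
  then show ?thesis by (simp add: R_def)
qed (simp add: R_def)

lemma R_hi: "i \<ge> n \<or> j \<ge> n \<Longrightarrow> R i j b = 0"
  by (auto simp: R_def)

lemma slice_th: "slice D (th v) x c = (\<Sum>i<n. v i * slice D (e i) x c)"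
proof -
  have "slice D (th v) x c = (\<Sum>b\<in>Te. th v b * D b c x)"
    by (rule slice_eq[OF coalg fin_Te]) (rule th_out)
  also have "\<dots> = (\<Sum>i<n. v i * (\<Sum>b\<in>Te. e i b * D b c x))"
    unfolding th_def by (simp add: sum_distrib_left sum_distrib_right mult_ac sum.swap[of _ Te])
  also have "\<dots> = (\<Sum>i<n. v i * slice D (e i) x c)"
    by (rule sum.cong[OF refl]) (simp add: slice_eq[OF coalg fin_Te e_out])
  finally show ?thesis .
qed

lemma SAQ: "Sum_any (\<lambda>b. R i k b * g b) = (\<Sum>b\<in>Q. R i k b * g b)"
  by (rule SA[OF fin_Q]) (simp add: R_outQ)

end

context cx begin

lemma R_coassoc: "(\<Sum>j<n. R i j y * R j k x) = Sum_any (\<lambda>b. R i k b * D b x y)"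
proof (cases "i < n \<and> k < n")
  case False
  then show ?thesis by (auto simp: R_hi not_less)
next
  case True
  then have i: "i < n" and k: "k < n" by auto
  define u where "u k = (\<Sum>j<n. R i j y * R j k x)" for k
  define w where "w k = Sum_any (\<lambda>b. R i k b * D b x y)" for k
  have u: "u \<in> fd_elems n" by (auto simp: u_def fd_elems_def R_hi)
  have w: "w \<in> fd_elems n" by (auto simp: w_def fd_elems_def R_hi)
  have "th u = slice D (slice D (e i) y) x"
  proof
    fix c
    have "th u c = (\<Sum>k<n. \<Sum>j<n. R i j y * (R j k x * e k c))"
      by (simp add: th_def u_def sum_distrib_right sum_distrib_left mult_ac)
    also have "\<dots> = (\<Sum>j<n. \<Sum>k<n. R i j y * (R j k x * e k c))" by (rule sum.swap)
    also have "\<dots> = (\<Sum>j<n. R i j y * slice D (e j) x c)"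
      by (rule sum.cong[OF refl]) (simp add: Rslice' sum_distrib_left)
    also have "\<dots> = slice D (slice D (e i) y) x c"
      by (simp add: Rslice[OF i] slice_th)
    finally show "th u c = slice D (slice D (e i) y) x c" .
  qed
  moreover have "th w = slice D (slice D (e i) y) x"
  proof
    fix c
    have "th w c = (\<Sum>k<n. \<Sum>b\<in>Q. D b x y * (R i k b * e k c))"
      unfolding w_def SAQ by (simp add: th_def sum_distrib_right sum_distrib_left mult_ac)
    also have "\<dots> = (\<Sum>b\<in>Q. \<Sum>k<n. D b x y * (R i k b * e k c))" by (rule sum.swap)
    also have "\<dots> = (\<Sum>b\<in>Q. D b x y * slice D (e i) b c)"
      by (rule sum.cong[OF refl]) (simp add: Rslice'[OF i] sum_distrib_left)
    also have "\<dots> = slice D (slice D (e i) y) x c"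
      by (rule SS[OF coalg fin_Te e_out[OF i], symmetric])
    finally show "th w c = slice D (slice D (e i) y) x c" .
  qed
  ultimately have "u = w" using th_inj[OF u w] by simp
  then show ?thesis by (simp add: u_def w_def fun_eq_iff)
qed

lemma R_counit: assumes i: "i < n" and j: "j < n"
  shows "Sum_any (\<lambda>b. R i j b * eps b) = (if i = j then 1 else 0)"
proof -
  define u where "u j = Sum_any (\<lambda>b. R i j b * eps b)" for j
  define d where "d j = (if i = j then 1 else (0::'k))" for j
  have u: "u \<in> fd_elems n" by (auto simp: u_def fd_elems_def R_hi)
  have d: "d \<in> fd_elems n" using i by (auto simp: d_def fd_elems_def)
  have "th u = e i"
  proof
    fix c
    have "th u c = (\<Sum>k<n. \<Sum>b\<in>Q. eps b * (R i k b * e k c))"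
      unfolding u_def SAQ by (simp add: th_def sum_distrib_right sum_distrib_left mult_ac)
    also have "\<dots> = (\<Sum>b\<in>Q. \<Sum>k<n. eps b * (R i k b * e k c))" by (rule sum.swap)
    also have "\<dots> = (\<Sum>b\<in>Q. eps b * slice D (e i) b c)"
      by (rule sum.cong[OF refl]) (simp add: Rslice'[OF i] sum_distrib_left)
    also have "\<dots> = e i c"
      by (rule CU[OF coalg fin_Te e_out[OF i]])
    finally show "th u c = e i c" .
  qed
  moreover have "th d = e i"
  proof
    fix c
    have "th d c = (\<Sum>k<n. if i = k then e k c else 0)"
      unfolding th_def d_def by (rule sum.cong) auto
    then show "th d c = e i c" using i by simp
  qed
  ultimately have "u = d" using th_inj[OF u d] by simp
  then show ?thesis using j by (simp add: u_def d_def fun_eq_iff)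
qed

lemma comod: "fd_comodule D eps n R"
  unfolding fd_comodule_def
proof (intro conjI allI impI)
  fix i j
  show "finite {b. R i j b \<noteq> 0}"
    using fin_Q R_outQ by (auto intro: finite_subset)
qed (auto simp: R_hi R_coassoc R_counit)

lemma th_act: "coideal_act D f (th v) = th (comod_act n R f v)"
proof
  fix c
  have inn: "f b * slice D (th v) b c = (\<Sum>i<n. \<Sum>j<n. f b * v i * R i j b * e j c)" for b
  proof -
    have "slice D (th v) b c = (\<Sum>i<n. v i * (\<Sum>j<n. R i j b * e j c))"
      unfolding slice_th by (rule sum.cong) (simp_all add: Rslice')
    then show ?thesis by (simp add: sum_distrib_left mult.assoc)
  qed
  have "coideal_act D f (th v) c = (\<Sum>b\<in>Q. f b * slice D (th v) b c)"
    by (rule coideal_act_eq[OF coalg fin_Te th_out fin_Q]) auto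
  also have "\<dots> = (\<Sum>b\<in>Q. \<Sum>i<n. \<Sum>j<n. f b * v i * R i j b * e j c)"
    by (simp add: inn)
  finally have l: "coideal_act D f (th v) c = (\<Sum>b\<in>Q. \<Sum>i<n. \<Sum>j<n. f b * v i * R i j b * e j c)" .
  have inn2: "(\<Sum>i<n. v i * Sum_any (\<lambda>b. R i j b * f b)) * e j c = (\<Sum>i<n. \<Sum>b\<in>Q. f b * v i * R i j b * e j c)" for j
    unfolding SAQ sum_distrib_right sum_distrib_left
    by (rule sum.cong[OF refl], rule sum.cong[OF refl]) (simp add: mult_ac)
  have "th (comod_act n R f v) c = (\<Sum>j<n. \<Sum>i<n. \<Sum>b\<in>Q. f b * v i * R i j b * e j c)"
    unfolding th_def comod_act_def by (simp only: inn2)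
  also have "\<dots> = (\<Sum>i<n. \<Sum>j<n. \<Sum>b\<in>Q. f b * v i * R i j b * e j c)"
    by (rule sum.swap)
  also have "\<dots> = (\<Sum>i<n. \<Sum>b\<in>Q. \<Sum>j<n. f b * v i * R i j b * e j c)"
    by (rule sum.cong[OF refl], rule sum.swap)
  also have "\<dots> = (\<Sum>b\<in>Q. \<Sum>i<n. \<Sum>j<n. f b * v i * R i j b * e j c)"
    by (rule sum.swap)
  finally show "coideal_act D f (th v) c = th (comod_act n R f v) c" using l by simp
qed

lemma comod_act_fd: "comod_act n R f v \<in> fd_elems n"
  by (simp add: comod_act_def fd_elems_def R_hi)

lemma embed_I:
  assumes "embeds_in_free D (fd_elems n) (comod_act n R)"
  shows "embeds_in_free D I (coideal_act D)"
proof -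
  from assms obtain \<phi> where
    p1: "\<And>x. x \<in> fd_elems n \<Longrightarrow> \<phi> x \<in> free_elems" and
    p2: "\<And>x y. x \<in> fd_elems n \<Longrightarrow> y \<in> fd_elems n \<Longrightarrow> \<phi> (x + y) = \<phi> x + \<phi> y" and
    p3: "\<And>f x. x \<in> fd_elems n \<Longrightarrow> \<phi> (comod_act n R f x) = free_act D f (\<phi> x)" and
    p4: "inj_on \<phi> (fd_elems n)"
    unfolding embeds_in_free_def by blast
  show ?thesis
    unfolding embeds_in_free_def
  proof (intro exI[of _ "\<lambda>x. \<phi> (crd x)"] conjI ballI allI)
    fix x assume "x \<in> I" then show "\<phi> (crd x) \<in> free_elems" by (intro p1 crd(1))
  next
    fix x y assume x: "x \<in> I" and y: "y \<in> I"
    have s: "crd x + crd y \<in> fd_elems n" using crd(1)[OF x] crd(1)[OF y] by (simp add: fd_elems_def)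
    have "th (crd x + crd y) = th (crd x) + th (crd y)"
      by (simp add: th_def fun_eq_iff distrib_right sum.distrib)
    then have "th (crd x + crd y) = x + y"
      by (simp only: crd(2)[OF x] crd(2)[OF y])
    then have "crd (x + y) = crd x + crd y" using crd_th[OF s] by metis
    then show "\<phi> (crd (x + y)) = \<phi> (crd x) + \<phi> (crd y)"
      using p2[OF crd(1)[OF x] crd(1)[OF y]] by metis
  next
    fix f x assume x: "x \<in> I"
    have "coideal_act D f x = th (comod_act n R f (crd x))"
      using th_act[of f "crd x"] crd(2)[OF x] by metis
    then have "crd (coideal_act D f x) = comod_act n R f (crd x)"
      using crd_th[OF comod_act_fd] by metis
    then show "\<phi> (crd (coideal_act D f x)) = free_act D f (\<phi> (crd x))"
      using p3[OF crd(1)[OF x]] by metis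
  next
    show "inj_on (\<lambda>x. \<phi> (crd x)) I"
    proof (rule inj_onI)
      fix x y assume x: "x \<in> I" and y: "y \<in> I" and eq: "\<phi> (crd x) = \<phi> (crd y)"
      then have "crd x = crd y" using inj_onD[OF p4 eq crd(1)[OF x] crd(1)[OF y]] by blast
      then show "x = y" using crd(2)[OF x] crd(2)[OF y] by metis
    qed
  qed
qed

end

theorem proposition3p9:
  fixes D :: "'b \<Rightarrow> 'b \<Rightarrow> 'b \<Rightarrow> 'k::field" and eps :: "'b \<Rightarrow> 'k"
  assumes "coalgebra D eps"
  shows "left_f_qcF D eps \<longleftrightarrow>
    (\<forall>I. right_coideal D I \<and> fin_dim_subspace I \<longrightarrow> embeds_in_free D I (coideal_act D))"
proof
  assume L: "left_f_qcF D eps"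
  show "\<forall>I. right_coideal D I \<and> fin_dim_subspace I \<longrightarrow> embeds_in_free D I (coideal_act D)"
  proof (intro allI impI)
    fix I :: "('b \<Rightarrow> 'k) set" assume "right_coideal D I \<and> fin_dim_subspace I"
    then have rc: "right_coideal D I" and fd: "fin_dim_subspace I" by auto
    obtain n e where ne: "I = fv.span (e ` {..<(n::nat)})" "inj_on e {..<n}" "fv.independent (e ` {..<n})"
      using basis_enum[OF fd] by blast
    interpret c: cx D eps I n e using assms rc ne by unfold_locales
    show "embeds_in_free D I (coideal_act D)"
      using L c.comod unfolding left_f_qcF_def by (intro c.embed_I) blast
  qed
next
  assume H: "\<forall>I. right_coideal D I \<and> fin_dim_subspace I \<longrightarrow> embeds_in_free D I (coideal_act D)"
  show "left_f_qcF D eps"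
    unfolding left_f_qcF_def using embed_comod[OF assms _ H] by blast
qed

end
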